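(* Let $\langle A, \leq, \otimes, \ominus, \mathbf{1}\rangle$ be a residuated partially ordered monoid with bottom element $\bot$, let $k\geq1$ and $a = a_1\ldots a_k$, $b = b_1\ldots b_k \in Lex_k(A)$. Define $\gamma(a,b) = \min\{ i \mid a_i \ominus b_i \in C(A)\}$ and $\delta(a,b) = \min\{ i \mid (a_i \ominus b_i) \otimes b_i < a_i\}$, each being $k+1$ when the set is empty. Then either $\delta(a,b) = k+1$ or $\delta(a,b) \leq \gamma(a,b)$.
   Context: A residuated partially ordered monoid $\langle A, \leq, \otimes, \ominus, \mathbf{1}\rangle$ consists of a partial order $\langle A,\leq\rangle$, a commutative monoid $\langle A,\otimes,\mathbf{1}\rangle$, and a binary operation $\ominus$ on $A$ such that for all $a,b,c\in A$: $b \otimes c \leq a$ iff $c \leq a \ominus b$. $a<b$ means $a\leq b$, $a\neq b$. $I(A) = \{c \in A \mid \forall a,b \in A.\ a \otimes c = b \otimes c \Rightarrow a = b\}$, $C(A)=A\setminus I(A)$. $Lex_k(A)\subseteq A^k$ is defined by $Lex_1(A) = A$ and $Lex_{k+1}(A) = I(A)\, Lex_k(A) \cup C(A)\{\bot\}^k$, where $XY$ denotes the set of concatenations of sequences and $\{\bot\}^k$ the singleton of the sequence of $k$ copies of $\bot$. *)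

theory Defs
  imports Main
begin

text \<open>A residuated partially ordered monoid on the whole type 'a:
  le is a partial order, (mult, one) a commutative monoid, res the residual,
  with  mult b c \<le> a  iff  c \<le> res a b  (res a b stands for a \<ominus> b).\<close>

definition residuated_pomonoid ::
  "('a \<Rightarrow> 'a \<Rightarrow> bool) \<Rightarrow> ('a \<Rightarrow> 'a \<Rightarrow> 'a) \<Rightarrow> ('a \<Rightarrow> 'a \<Rightarrow> 'a) \<Rightarrow> 'a \<Rightarrow> bool" where
  "residuated_pomonoid le mult res one \<longleftrightarrow>
     (\<forall>a. le a a) \<and>
     (\<forall>a b. le a b \<and> le b a \<longrightarrow> a = b) \<and>
     (\<forall>a b c. le a b \<and> le b c \<longrightarrow> le a c) \<and>
     (\<forall>a b c. mult (mult a b) c = mult a (mult b c)) \<and>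
     (\<forall>a b. mult a b = mult b a) \<and>
     (\<forall>a. mult one a = a) \<and>
     (\<forall>a b c. le (mult b c) a \<longleftrightarrow> le c (res a b))"

definition is_bottom :: "('a \<Rightarrow> 'a \<Rightarrow> bool) \<Rightarrow> 'a \<Rightarrow> bool" where
  "is_bottom le bt \<longleftrightarrow> (\<forall>a. le bt a)"

definition strict :: "('a \<Rightarrow> 'a \<Rightarrow> bool) \<Rightarrow> 'a \<Rightarrow> 'a \<Rightarrow> bool" where
  "strict le a b \<longleftrightarrow> le a b \<and> a \<noteq> b"

definition Icanc :: "('a \<Rightarrow> 'a \<Rightarrow> 'a) \<Rightarrow> 'a set" where
  "Icanc mult = {c. \<forall>a b. mult a c = mult b c \<longrightarrow> a = b}"

definition Cnon :: "('a \<Rightarrow> 'a \<Rightarrow> 'a) \<Rightarrow> 'a set" where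
  "Cnon mult = UNIV - Icanc mult"

fun Lex :: "('a \<Rightarrow> 'a \<Rightarrow> 'a) \<Rightarrow> 'a \<Rightarrow> nat \<Rightarrow> 'a list set" where
  "Lex mult bt 0 = {}"
| "Lex mult bt (Suc 0) = {[x] | x. True}"
| "Lex mult bt (Suc (Suc k)) =
     {c # xs | c xs. c \<in> Icanc mult \<and> xs \<in> Lex mult bt (Suc k)}
     \<union> {c # replicate (Suc k) bt | c. c \<in> Cnon mult}"

text \<open>gamma and delta, with positions 1..k (list index i-1), default k+1.\<close>
definition gamma :: "('a \<Rightarrow> 'a \<Rightarrow> 'a) \<Rightarrow> ('a \<Rightarrow> 'a \<Rightarrow> 'a) \<Rightarrow> nat \<Rightarrow> 'a list \<Rightarrow> 'a list \<Rightarrow> nat" where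
  "gamma mult res k a b =
     Min ({i \<in> {1..k}. res (a ! (i - 1)) (b ! (i - 1)) \<in> Cnon mult} \<union> {k + 1})"

definition delta :: "('a \<Rightarrow> 'a \<Rightarrow> bool) \<Rightarrow> ('a \<Rightarrow> 'a \<Rightarrow> 'a) \<Rightarrow> ('a \<Rightarrow> 'a \<Rightarrow> 'a) \<Rightarrow> nat \<Rightarrow> 'a list \<Rightarrow> 'a list \<Rightarrow> nat" where
  "delta le mult res k a b =
     Min ({i \<in> {1..k}. strict le (mult (res (a ! (i - 1)) (b ! (i - 1))) (b ! (i - 1))) (a ! (i - 1))} \<union> {k + 1})"

end

theory Submission
  imports Defs
begin

lemma Lex_len: "xs \<in> Lex mult bt n \<Longrightarrow> length xs = n"
  by (induction mult bt n arbitrary: xs rule: Lex.induct) auto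

lemma Lex_bt: "xs \<in> Lex mult bt n \<Longrightarrow> i < j \<Longrightarrow> j < length xs \<Longrightarrow> xs ! i \<in> Cnon mult \<Longrightarrow> xs ! j = bt"
proof (induction mult bt n arbitrary: xs i j rule: Lex.induct)
  case (1 mult bt) then show ?case by simp
next
  case (2 mult bt) then show ?case by auto
next
  case (3 mult bt k)
  from "3.prems"(1) have "(\<exists>c ys. xs = c # ys \<and> c \<in> Icanc mult \<and> ys \<in> Lex mult bt (Suc k)) \<or> (\<exists>c. xs = c # replicate (Suc k) bt)"
    by auto
  then show ?case
  proof (elim disjE exE conjE)
    fix c ys assume xs: "xs = c # ys" and c: "c \<in> Icanc mult" and ys: "ys \<in> Lex mult bt (Suc k)"
    have "i \<noteq> 0" using "3.prems"(4) c xs by (cases i) (auto simp: Cnon_def)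
    then obtain i' where i': "i = Suc i'" by (cases i) auto
    then obtain j' where j': "j = Suc j'" using "3.prems"(2) by (cases j) auto
    show ?thesis using "3.IH"[OF ys, of i' j'] "3.prems" xs i' j' by simp
  next
    fix c assume xs: "xs = c # replicate (Suc k) bt"
    then obtain j' where j': "j = Suc j'" using "3.prems"(2) by (cases j) auto
    show ?thesis using xs j' "3.prems"(3) by (simp del: replicate_Suc)
  qed
qed

theorem lemma9:
  fixes le :: "'a \<Rightarrow> 'a \<Rightarrow> bool" and mult res :: "'a \<Rightarrow> 'a \<Rightarrow> 'a"
    and one bt :: 'a and k :: nat and a b :: "'a list"
  assumes "residuated_pomonoid le mult res one"
    and "is_bottom le bt"
    and "k \<ge> 1"
    and "a \<in> Lex mult bt k" and "b \<in> Lex mult bt k"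
  shows "delta le mult res k a b = k + 1 \<or> delta le mult res k a b \<le> gamma mult res k a b"
proof (rule ccontr)
  assume H: "\<not> ?thesis"
  define D where "D = {i \<in> {1..k}. strict le (mult (res (a ! (i - 1)) (b ! (i - 1))) (b ! (i - 1))) (a ! (i - 1))} \<union> {k + 1}"
  define G where "G = {i \<in> {1..k}. res (a ! (i - 1)) (b ! (i - 1)) \<in> Cnon mult} \<union> {k + 1}"
  let ?d = "Min D" and ?g = "Min G"
  have fD: "finite D" "D \<noteq> {}" and fG: "finite G" "G \<noteq> {}" unfolding D_def G_def by auto
  have dD: "?d \<in> D" using fD by (rule Min_in)
  have gG: "?g \<in> G" using fG by (rule Min_in)
  have H1: "?d \<noteq> k + 1" and H2: "\<not> ?d \<le> ?g" using H unfolding delta_def gamma_def D_def G_def by auto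
  have dk: "?d \<in> {1..k}" and dstrict: "strict le (mult (res (a ! (?d - 1)) (b ! (?d - 1))) (b ! (?d - 1))) (a ! (?d - 1))"
    using dD H1 unfolding D_def by auto
  have "?g \<noteq> k + 1" using H2 dk by auto
  then have gk: "?g \<in> {1..k}" and gC: "res (a ! (?g - 1)) (b ! (?g - 1)) \<in> Cnon mult"
    using gG unfolding G_def by auto
  have gnot: "\<not> strict le (mult (res (a ! (?g - 1)) (b ! (?g - 1))) (b ! (?g - 1))) (a ! (?g - 1))"
  proof
    assume "strict le (mult (res (a ! (?g - 1)) (b ! (?g - 1))) (b ! (?g - 1))) (a ! (?g - 1))"
    then have "?g \<in> D" using gk unfolding D_def by auto
    then have "?d \<le> ?g" using fD by simp
    then show False using H2 by simp
  qed
  note R = assms(1)[unfolded residuated_pomonoid_def]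
  have resle: "\<And>x y. le (mult (res x y) y) x"
  proof -
    fix x y
    have "le (res x y) (res x y)" using R by blast
    then have "le (mult y (res x y)) x" using R by blast
    then show "le (mult (res x y) y) x" using R by metis
  qed
  define c where "c = res (a ! (?g - 1)) (b ! (?g - 1))"
  have eq: "mult c (b ! (?g - 1)) = a ! (?g - 1)"
    using gnot resle unfolding strict_def c_def by blast
  have aC: "a ! (?g - 1) \<in> Cnon mult"
  proof (rule ccontr)
    assume "a ! (?g - 1) \<notin> Cnon mult"
    then have aI: "a ! (?g - 1) \<in> Icanc mult" by (simp add: Cnon_def)
    have "c \<in> Icanc mult"
      unfolding Icanc_def
    proof (intro CollectI allI impI)
      fix x y assume "mult x c = mult y c"
      then have "mult (mult x c) (b ! (?g - 1)) = mult (mult y c) (b ! (?g - 1))" by simp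
      then have "mult x (a ! (?g - 1)) = mult y (a ! (?g - 1))" using R eq by metis
      then show "x = y" using aI unfolding Icanc_def by blast
    qed
    then show False using gC c_def by (simp add: Cnon_def)
  qed
  have la: "length a = k" using assms(4) by (rule Lex_len)
  have abt: "a ! (?d - 1) = bt"
    using Lex_bt[OF assms(4), of "?g - 1" "?d - 1"] aC H2 dk gk la by auto
  have "le bt (mult (res bt (b ! (?d - 1))) (b ! (?d - 1)))" using assms(2) unfolding is_bottom_def by blast
  moreover have "le (mult (res bt (b ! (?d - 1))) (b ! (?d - 1))) bt" using resle by blast
  ultimately have "mult (res bt (b ! (?d - 1))) (b ! (?d - 1)) = bt" using R by blast
  then show False using dstrict abt unfolding strict_def by simp
qed

end
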